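(* Let ${\sf APE}$ be the non-symmetric suboperad of ${\sf T}\mathbb{N}$ generated by $01$. Then the elements of ${\sf APE}$ of arity $n$ are exactly the words $x$ of length $n$ over $\mathbb{N}$ satisfying $x_1=0$ and $1\le x_{i+1}\le x_i+1$ for all $1\le i\le n-1$. Moreover, the elements of ${\sf APE}$ of arity $n$ are in bijection with the rooted plane trees with $n$ nodes. Finally, ${\sf APE}$ is isomorphic (as a non-symmetric operad) to the free non-symmetric operad on one generator of arity two.
   Context: Let $\mathbb{N}$ be the additive monoid of nonnegative integers. ${\sf T}\mathbb{N}=\biguplus_{n\ge1}\mathbb{N}^n$, elements of arity $n$ being words $x=(x_1,\dots,x_n)$ of length $n$ over $\mathbb{N}$ (written without separators, e.g. $01=(0,1)$), with partial compositions $x\circ_i y:=(x_1,\dots,x_{i-1},x_i+y_1,\dots,x_i+y_m,x_{i+1},\dots,x_n)$ for $x$ of arity $n$, $y$ of arity $m$, $1\le i\le n$; it is a non-symmetric set-operad with unit $(0)$. The non-symmetric suboperad generated by a set $S$ is the smallest subset containing $S$ and the unit $(0)$ and closed under all partial compositions $\circ_i$. *)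

theory Defs
  imports Main
begin

text \<open>Elements of T N are nonempty words over nat, represented as nat lists.
  Positions are 1-indexed in the paper; list indexing (!) is 0-indexed.\<close>

definition pcomp :: "nat list \<Rightarrow> nat \<Rightarrow> nat list \<Rightarrow> nat list" where
  "pcomp x i y = take (i - 1) x @ map (\<lambda>a. x ! (i - 1) + a) y @ drop i x"

inductive APE :: "nat list \<Rightarrow> bool" where
  APE_unit: "APE [0]"
| APE_gen: "APE [0, 1]"
| APE_comp: "APE x \<Longrightarrow> APE y \<Longrightarrow> 1 \<le> i \<Longrightarrow> i \<le> length x \<Longrightarrow> APE (pcomp x i y)"

datatype ptree = PNode "ptree list"

fun nodes :: "ptree \<Rightarrow> nat" where
  "nodes (PNode ts) = 1 + sum_list (map nodes ts)"

text \<open>The free non-symmetric operad on one binary generator: binary trees,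
  arity = number of leaves, unit = Leaf, generator = Bin Leaf Leaf,
  partial composition = grafting onto the i-th leaf (1-indexed).\<close>
datatype btree = Leaf | Bin btree btree

fun leaves :: "btree \<Rightarrow> nat" where
  "leaves Leaf = 1"
| "leaves (Bin l r) = leaves l + leaves r"

fun graft :: "btree \<Rightarrow> nat \<Rightarrow> btree \<Rightarrow> btree" where
  "graft Leaf i t = (if i = 1 then t else Leaf)"
| "graft (Bin l r) i t =
     (if i \<le> leaves l then Bin (graft l i t) r else Bin l (graft r (i - leaves l) t))"

end

theory Submission
  imports Defs
begin

fun phi :: "btree \<Rightarrow> nat list" where
  "phi Leaf = [0]"
| "phi (Bin l r) = phi l @ map Suc (phi r)"

definition good :: "nat list \<Rightarrow> bool" where
  "good x \<longleftrightarrow> (x \<noteq> [] \<and> x ! 0 = 0 \<and>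
             (\<forall>i. i + 1 < length x \<longrightarrow> 1 \<le> x ! (i + 1) \<and> x ! (i + 1) \<le> x ! i + 1))"

lemma len_phi: "length (phi t) = leaves t"
  by (induction t) auto

lemma phi_ne: "phi t \<noteq> []"
  by (induction t) auto

lemma leaves_pos: "leaves t \<ge> 1"
  by (induction t) auto

lemma pcomp_app: "1 \<le> j \<Longrightarrow> j \<le> length M \<Longrightarrow> pcomp (L @ M) (length L + j) y = L @ pcomp M j y"
proof -
  assume "1 \<le> j" "j \<le> length M"
  then have e: "length L + j - 1 = length L + (j - 1)" by simp
  show ?thesis unfolding pcomp_def e by (simp add: nth_append)
qed

lemma pcomp_map: "1 \<le> j \<Longrightarrow> j \<le> length R \<Longrightarrow> pcomp (map Suc R) j y = map Suc (pcomp R j y)"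
  by (simp add: pcomp_def take_map drop_map)

lemma phi_graft: "1 \<le> i \<Longrightarrow> i \<le> leaves s \<Longrightarrow> phi (graft s i t) = pcomp (phi s) i (phi t)"
proof (induction s arbitrary: i)
  case Leaf
  then show ?case by (simp add: pcomp_def)
next
  case (Bin l r)
  show ?case
  proof (cases "i \<le> leaves l")
    case True
    have a: "i - 1 < length (phi l)" using True Bin.prems len_phi[of l] by simp
    have b: "i \<le> length (phi l)" using True len_phi[of l] by simp
    show ?thesis using True Bin.IH(1)[of i] Bin.prems a b by (simp add: pcomp_def nth_append)
  next
    case False
    have 1: "1 \<le> i - leaves l" "i - leaves l \<le> leaves r" using False Bin.prems by auto
    have e2: "i = length (phi l) + (i - leaves l)" using False by (simp add: len_phi)
    have "pcomp (phi l @ map Suc (phi r)) i (phi t) = phi l @ pcomp (map Suc (phi r)) (i - leaves l) (phi t)"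
      apply (subst e2) using 1 by (intro pcomp_app) (simp_all add: len_phi)
    then show ?thesis using False Bin.IH(2)[OF 1] 1 by (simp add: pcomp_map len_phi)
  qed
qed

lemma APE_phi: "APE (phi t)"
proof (induction t)
  case Leaf
  then show ?case by (simp add: APE_unit)
next
  case (Bin l r)
  have "APE (pcomp [0,1] 2 (phi r))" by (rule APE_comp[OF APE_gen Bin(2)]) auto
  then have "APE (pcomp (pcomp [0,1] 2 (phi r)) 1 (phi l))"
    by (rule APE_comp[OF _ Bin(1)]) (auto simp: pcomp_def)
  moreover have "pcomp (pcomp [0,1] 2 (phi r)) 1 (phi l) = phi (Bin l r)"
    by (simp add: pcomp_def)
  ultimately show ?case by simp
qed

lemma APE_ex_phi: "APE x \<Longrightarrow> \<exists>t. phi t = x"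
proof (induction rule: APE.induct)
  case APE_unit
  then show ?case by (metis phi.simps(1))
next
  case APE_gen
  then show ?case by (rule exI[of _ "Bin Leaf Leaf"]) simp
next
  case (APE_comp x y i)
  then obtain s t where "phi s = x" "phi t = y" by blast
  then show ?case using APE_comp phi_graft[of i s t] len_phi[of s] by metis
qed

lemma good_phi: "good (phi t)"
proof (induction t)
  case Leaf
  then show ?case by (simp add: good_def)
next
  case (Bin l r)
  let ?L = "phi l" and ?R = "phi r"
  have gL: "?L \<noteq> []" "?L ! 0 = 0" "\<And>i. i + 1 < length ?L \<Longrightarrow> 1 \<le> ?L ! (i + 1) \<and> ?L ! (i + 1) \<le> ?L ! i + 1"
    using Bin(1) unfolding good_def by auto
  have gR: "?R \<noteq> []" "?R ! 0 = 0" "\<And>i. i + 1 < length ?R \<Longrightarrow> 1 \<le> ?R ! (i + 1) \<and> ?R ! (i + 1) \<le> ?R ! i + 1"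
    using Bin(2) unfolding good_def by auto
  have A: "phi (Bin l r) \<noteq> []" using gL by simp
  have B: "phi (Bin l r) ! 0 = 0" using gL by (simp add: nth_append)
  have C: "\<forall>i. i + 1 < length (phi (Bin l r)) \<longrightarrow> 1 \<le> phi (Bin l r) ! (i + 1) \<and> phi (Bin l r) ! (i + 1) \<le> phi (Bin l r) ! i + 1"
  proof (intro allI impI)
    fix i assume i: "i + 1 < length (phi (Bin l r))"
    consider "i + 1 < length ?L" | "i + 1 = length ?L" | "i \<ge> length ?L" by linarith
    then show "1 \<le> phi (Bin l r) ! (i + 1) \<and> phi (Bin l r) ! (i + 1) \<le> phi (Bin l r) ! i + 1"
    proof cases
      case 1 then show ?thesis using gL(3)[OF 1] by (simp add: nth_append)
    next
      case 2 then show ?thesis using gR by (simp add: nth_append)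
    next
      case 3
      have j: "(i - length ?L) + 1 < length ?R" using i 3 by simp
      have e: "i + 1 - length ?L = (i - length ?L) + 1" using 3 by simp
      show ?thesis using 3 gR(3)[OF j] j by (simp add: nth_append e Suc_diff_le)
    qed
  qed
  show ?case using A B C unfolding good_def by blast
qed

lemma phi_ext: "1 \<le> k \<Longrightarrow> k \<le> last (phi t) + 1 \<Longrightarrow> \<exists>t'. phi t' = phi t @ [k]"
proof (induction t arbitrary: k)
  case Leaf
  then show ?case by (intro exI[of _ "Bin Leaf Leaf"]) simp
next
  case (Bin l r)
  show ?case
  proof (cases "k = 1")
    case True
    then show ?thesis by (intro exI[of _ "Bin (Bin l r) Leaf"]) simp
  next
    case False
    have "last (phi (Bin l r)) = Suc (last (phi r))" using phi_ne[of r] by (simp add: last_map)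
    then have "1 \<le> k - 1" "k - 1 \<le> last (phi r) + 1" using False Bin.prems by auto
    then obtain r' where "phi r' = phi r @ [k - 1]" using Bin.IH(2) by blast
    then have "phi (Bin l r') = phi (Bin l r) @ [k]" using False Bin.prems by simp
    then show ?thesis by blast
  qed
qed

lemma good_ex_phi: "good x \<Longrightarrow> \<exists>t. phi t = x"
proof (induction x rule: rev_induct)
  case Nil
  then show ?case by (simp add: good_def)
next
  case (snoc k xs)
  show ?case
  proof (cases "xs = []")
    case True
    then show ?thesis using snoc.prems by (intro exI[of _ Leaf]) (simp add: good_def)
  next
    case False
    have g: "(xs @ [k]) ! 0 = 0" "\<And>i. i + 1 < length (xs @ [k]) \<Longrightarrow> 1 \<le> (xs @ [k]) ! (i + 1) \<and> (xs @ [k]) ! (i + 1) \<le> (xs @ [k]) ! i + 1"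
      using snoc.prems unfolding good_def by auto
    have B: "xs ! 0 = 0" using g(1) False by (simp add: nth_append)
    have C: "\<forall>i. i + 1 < length xs \<longrightarrow> 1 \<le> xs ! (i + 1) \<and> xs ! (i + 1) \<le> xs ! i + 1"
    proof (intro allI impI)
      fix i assume "i + 1 < length xs"
      then show "1 \<le> xs ! (i + 1) \<and> xs ! (i + 1) \<le> xs ! i + 1" using g(2)[of i] by (simp add: nth_append)
    qed
    have "good xs" using False B C unfolding good_def by blast
    then obtain t where t: "phi t = xs" using snoc.IH by blast
    have "1 \<le> k \<and> k \<le> xs ! (length xs - 1) + 1" using g(2)[of "length xs - 1"] False
      by (simp add: nth_append)
    then have "1 \<le> k" "k \<le> last xs + 1" using False by (auto simp: last_conv_nth)
    then show ?thesis using phi_ext[of k t] t by auto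
  qed
qed

lemma APE_iff_good: "APE x \<longleftrightarrow> good x"
  using APE_ex_phi good_phi good_ex_phi APE_phi by metis

lemma phi_pos: "0 < j \<Longrightarrow> j < length (phi t) \<Longrightarrow> phi t ! j \<ge> 1"
  using good_phi[of t] unfolding good_def by (metis Suc_eq_plus1 Suc_pred)

lemma phi_inj: "phi s = phi t \<Longrightarrow> s = t"
proof (induction s arbitrary: t)
  case Leaf
  then show ?case
  proof (cases t)
    case (Bin a b)
    then have "length (phi Leaf) = length (phi t)" using Leaf by simp
    then show ?thesis using Bin len_phi leaves_pos[of a] leaves_pos[of b] by simp
  qed simp
next
  case (Bin l r)
  then obtain l' r' where t: "t = Bin l' r'"
  proof (cases t)
    case Leaf
    then have "length (phi (Bin l r)) = length (phi t)" using Bin.prems by simp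
    then show ?thesis using Leaf len_phi leaves_pos[of l] leaves_pos[of r] by simp
  qed simp
  have eq: "phi l @ map Suc (phi r) = phi l' @ map Suc (phi r')" using Bin.prems t by simp
  have len: "length (phi l) = length (phi l')"
  proof (rule ccontr)
    assume "length (phi l) \<noteq> length (phi l')"
    then consider "length (phi l) < length (phi l')" | "length (phi l') < length (phi l)" by linarith
    then show False
    proof cases
      case 1
      let ?p = "length (phi l')"
      have "(phi l' @ map Suc (phi r')) ! ?p = 1" using phi_ne[of r'] good_phi[of r']
        by (simp add: nth_append good_def)
      moreover have "?p < length (phi l @ map Suc (phi r))" using eq phi_ne[of r'] by (metis length_append length_greater_0_conv length_map less_add_same_cancel1)
      then have "(phi l @ map Suc (phi r)) ! ?p \<ge> 2" using 1 phi_pos[of "?p - length (phi l)" r]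
        by (simp add: nth_append)
      ultimately show False using eq by simp
    next
      case 2
      let ?p = "length (phi l)"
      have "(phi l @ map Suc (phi r)) ! ?p = 1" using phi_ne[of r] good_phi[of r]
        by (simp add: nth_append good_def)
      moreover have "?p < length (phi l' @ map Suc (phi r'))" using eq phi_ne[of r] by (metis length_append length_greater_0_conv length_map less_add_same_cancel1)
      then have "(phi l' @ map Suc (phi r')) ! ?p \<ge> 2" using 2 phi_pos[of "?p - length (phi l')" r']
        by (simp add: nth_append)
      ultimately show False using eq by simp
    qed
  qed
  then have "phi l = phi l'" "map Suc (phi r) = map Suc (phi r')" using eq by auto
  then have "phi r = phi r'" by (simp add: inj_map_eq_map)
  then show ?case using Bin.IH \<open>phi l = phi l'\<close> t by simp
qed

fun toF :: "btree \<Rightarrow> ptree list" where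
  "toF Leaf = []"
| "toF (Bin l r) = PNode (toF l) # toF r"

fun fromF :: "ptree list \<Rightarrow> btree" where
  "fromF [] = Leaf"
| "fromF (PNode cs # ts) = Bin (fromF cs) (fromF ts)"

lemma toF_fromF: "toF (fromF ts) = ts"
  by (induction ts rule: fromF.induct) auto

lemma fromF_toF: "fromF (toF b) = b"
  by (induction b) auto

lemma leaves_toF: "leaves b = sum_list (map nodes (toF b)) + 1"
  by (induction b) auto

lemma bij_g: "bij_betw (\<lambda>b. PNode (toF b)) {t. leaves t = n} {p. nodes p = n}"
  unfolding bij_betw_def
proof
  show "inj_on (\<lambda>b. PNode (toF b)) {t. leaves t = n}"
    by (rule inj_onI) (metis fromF_toF ptree.inject)
  show "(\<lambda>b. PNode (toF b)) ` {t. leaves t = n} = {p. nodes p = n}"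
  proof (intro equalityI subsetI)
    fix p assume "p \<in> (\<lambda>b. PNode (toF b)) ` {t. leaves t = n}"
    then show "p \<in> {p. nodes p = n}" using leaves_toF by auto
  next
    fix p assume p: "p \<in> {p. nodes p = n}"
    obtain ts where ts: "p = PNode ts" by (cases p)
    have "leaves (fromF ts) = n" using p ts leaves_toF[of "fromF ts"] by (simp add: toF_fromF)
    then show "p \<in> (\<lambda>b. PNode (toF b)) ` {t. leaves t = n}" using ts toF_fromF[of ts] by force
  qed
qed

lemma inj_phi: "inj phi"
  using phi_inj by (rule injI)

lemma bij_phi_n: "bij_betw phi {t. leaves t = n} {x. APE x \<and> length x = n}"
  unfolding bij_betw_def
proof
  show "inj_on phi {t. leaves t = n}" using inj_phi by (simp add: inj_on_def)
  show "phi ` {t. leaves t = n} = {x. APE x \<and> length x = n}"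
    using APE_phi APE_ex_phi len_phi by fastforce
qed

lemma bij_phi: "bij_betw phi (UNIV :: btree set) {x. APE x}"
  unfolding bij_betw_def using inj_phi APE_phi APE_ex_phi by fastforce

theorem mainTheorem3:
  shows "(\<forall>x. APE x \<longleftrightarrow>
            (x \<noteq> [] \<and> x ! 0 = 0 \<and>
             (\<forall>i. i + 1 < length x \<longrightarrow> 1 \<le> x ! (i + 1) \<and> x ! (i + 1) \<le> x ! i + 1)))
      \<and> (\<forall>n\<ge>1. \<exists>f. bij_betw f {x. APE x \<and> length x = n} {t. nodes t = n})
      \<and> (\<exists>\<phi>. bij_betw \<phi> (UNIV :: btree set) {x. APE x}
            \<and> \<phi> Leaf = [0]
            \<and> (\<forall>t. length (\<phi> t) = leaves t)
            \<and> (\<forall>s i t. 1 \<le> i \<and> i \<le> leaves s \<longrightarrow> \<phi> (graft s i t) = pcomp (\<phi> s) i (\<phi> t)))"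
proof (intro conjI allI impI)
  fix x show "APE x \<longleftrightarrow>
            (x \<noteq> [] \<and> x ! 0 = 0 \<and>
             (\<forall>i. i + 1 < length x \<longrightarrow> 1 \<le> x ! (i + 1) \<and> x ! (i + 1) \<le> x ! i + 1))"
    using APE_iff_good unfolding good_def by blast
next
  fix n :: nat
  have "bij_betw ((\<lambda>b. PNode (toF b)) \<circ> inv_into {t. leaves t = n} phi) {x. APE x \<and> length x = n} {t. nodes t = n}"
    by (rule bij_betw_trans[OF bij_betw_inv_into[OF bij_phi_n] bij_g])
  then show "\<exists>f. bij_betw f {x. APE x \<and> length x = n} {t. nodes t = n}" by blast
next
  show "\<exists>\<phi>. bij_betw \<phi> (UNIV :: btree set) {x. APE x}
            \<and> \<phi> Leaf = [0]
            \<and> (\<forall>t. length (\<phi> t) = leaves t)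
            \<and> (\<forall>s i t. 1 \<le> i \<and> i \<le> leaves s \<longrightarrow> \<phi> (graft s i t) = pcomp (\<phi> s) i (\<phi> t))"
    using bij_phi len_phi phi_graft by (intro exI[of _ phi]) auto
qed

end
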